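(* Let $\mathfrak{A}=(V,\mu)$ be a finite-dimensional anti-commutative algebra over a field $\mathbb{K}$ of characteristic zero, and suppose $\mathfrak{B}$ is a subalgebra of $\mathfrak{A}$ such that $V$ is the (vector space) direct sum of $\mathfrak{B}$ and the center $\mathcal{Z}(\mathfrak{A})$. Let $t\in\mathbb{K}$, $t\neq 0$. Then $\mathcal{D}(t,1,0)(\mathfrak{A})$ is a vector space isomorphic to $\mathcal{D}(t,1,0)(\mathfrak{B})\times L(\mathfrak{A}/\mathfrak{A}^{(2)};\mathcal{Z}(\mathfrak{A}))$.
   Context: An anti-commutative algebra is a vector space $V$ with a bilinear map $\mu$ satisfying $\mu(X,Y)=-\mu(Y,X)$. For $\alpha,\beta,\gamma\in\mathbb{K}$, an $(\alpha,\beta,\gamma)$-derivation of $(V,\mu)$ is a linear map $D:V\to V$ with $\alpha D\mu(X,Y)=\beta\mu(DX,Y)+\gamma\mu(X,DY)$ for all $X,Y$; their space is $\mathcal{D}(\alpha,\beta,\gamma)(V,\mu)$. The center is $\mathcal{Z}(\mathfrak{A})=\{X:\mu(X,Y)=0\ \forall Y\in V\}$; the derived algebra $\mathfrak{A}^{(2)}$ is the linear span of all products $\mu(X,Y)$. $L(U;W)$ denotes the space of linear maps from $U$ to $W$. *)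

theory Defs
  imports Complex_Main
begin

definition anticomm_algebra :: "('k::field \<Rightarrow> 'v::ab_group_add \<Rightarrow> 'v) \<Rightarrow> ('v \<Rightarrow> 'v \<Rightarrow> 'v) \<Rightarrow> bool" where
  "anticomm_algebra scale mu \<longleftrightarrow> vector_space scale
     \<and> (\<forall>x. Vector_Spaces.linear scale scale (mu x))
     \<and> (\<forall>y. Vector_Spaces.linear scale scale (\<lambda>x. mu x y))
     \<and> (\<forall>x y. mu x y = - mu y x)"

definition center :: "('v::ab_group_add \<Rightarrow> 'v \<Rightarrow> 'v) \<Rightarrow> 'v set" where
  "center mu = {X. \<forall>Y. mu X Y = 0}"

definition derived_alg :: "('k::field \<Rightarrow> 'v::ab_group_add \<Rightarrow> 'v) \<Rightarrow> ('v \<Rightarrow> 'v \<Rightarrow> 'v) \<Rightarrow> 'v set" where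
  "derived_alg scale mu = module.span scale {mu X Y | X Y. True}"

definition subalgebra :: "('k::field \<Rightarrow> 'v::ab_group_add \<Rightarrow> 'v) \<Rightarrow> ('v \<Rightarrow> 'v \<Rightarrow> 'v) \<Rightarrow> 'v set \<Rightarrow> bool" where
  "subalgebra scale mu B \<longleftrightarrow> module.subspace scale B \<and> (\<forall>x\<in>B. \<forall>y\<in>B. mu x y \<in> B)"

text \<open>Linear maps U \<rightarrow> W (U, W subspaces of 'v), represented as functions on 'v
  that vanish outside U (extensional representation).\<close>
definition lin_maps :: "('k::field \<Rightarrow> 'v::ab_group_add \<Rightarrow> 'v) \<Rightarrow> 'v set \<Rightarrow> 'v set \<Rightarrow> ('v \<Rightarrow> 'v) set" where
  "lin_maps scale U W = {f. (\<forall>x\<in>U. f x \<in> W) \<and> (\<forall>x. x \<notin> U \<longrightarrow> f x = 0)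
      \<and> (\<forall>x\<in>U. \<forall>y\<in>U. f (x + y) = f x + f y)
      \<and> (\<forall>r. \<forall>x\<in>U. f (scale r x) = scale r (f x))}"

text \<open>(alpha,beta,gamma)-derivations of the subalgebra (U, mu restricted to U).
  For U = UNIV this is the space of (alpha,beta,gamma)-derivations of the whole algebra.\<close>
definition derivations :: "('k::field \<Rightarrow> 'v::ab_group_add \<Rightarrow> 'v) \<Rightarrow> ('v \<Rightarrow> 'v \<Rightarrow> 'v) \<Rightarrow> 'v set
    \<Rightarrow> 'k \<Rightarrow> 'k \<Rightarrow> 'k \<Rightarrow> ('v \<Rightarrow> 'v) set" where
  "derivations scale mu U a b c = {D \<in> lin_maps scale U U.
      \<forall>X\<in>U. \<forall>Y\<in>U. scale a (D (mu X Y)) = scale b (mu (D X) Y) + scale c (mu X (D Y))}"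

text \<open>L(A/A^(2); Z(A)), identified (canonically) with the linear maps V \<rightarrow> Z(A)
  vanishing on the derived algebra A^(2).\<close>
definition quot_maps :: "('k::field \<Rightarrow> 'v::ab_group_add \<Rightarrow> 'v) \<Rightarrow> ('v \<Rightarrow> 'v \<Rightarrow> 'v) \<Rightarrow> ('v \<Rightarrow> 'v) set" where
  "quot_maps scale mu = {f \<in> lin_maps scale UNIV (center mu). \<forall>x\<in>derived_alg scale mu. f x = 0}"

definition fadd :: "('v \<Rightarrow> 'v::ab_group_add) \<Rightarrow> ('v \<Rightarrow> 'v) \<Rightarrow> ('v \<Rightarrow> 'v)" where
  "fadd f g = (\<lambda>x. f x + g x)"

definition fscale :: "('k \<Rightarrow> 'v \<Rightarrow> 'v) \<Rightarrow> 'k \<Rightarrow> ('v \<Rightarrow> 'v) \<Rightarrow> ('v \<Rightarrow> 'v)" where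
  "fscale scale r f = (\<lambda>x. scale r (f x))"

definition iso_to_product :: "('k::field \<Rightarrow> 'v::ab_group_add \<Rightarrow> 'v) \<Rightarrow> ('v \<Rightarrow> 'v) set
    \<Rightarrow> ('v \<Rightarrow> 'v) set \<Rightarrow> ('v \<Rightarrow> 'v) set \<Rightarrow> bool" where
  "iso_to_product scale S T1 T2 \<longleftrightarrow> (\<exists>\<Phi>. bij_betw \<Phi> S (T1 \<times> T2)
      \<and> (\<forall>f\<in>S. \<forall>g\<in>S. \<Phi> (fadd f g) = (fadd (fst (\<Phi> f)) (fst (\<Phi> g)), fadd (snd (\<Phi> f)) (snd (\<Phi> g))))
      \<and> (\<forall>r. \<forall>f\<in>S. \<Phi> (fscale scale r f) = (fscale scale r (fst (\<Phi> f)), fscale scale r (snd (\<Phi> f)))))"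

end

theory Submission
  imports Defs
begin

theorem lemma2p6:
  fixes scale :: "'k::field_char_0 \<Rightarrow> 'v::ab_group_add \<Rightarrow> 'v"
    and mu :: "'v \<Rightarrow> 'v \<Rightarrow> 'v"
    and B :: "'v set"
    and t :: 'k
  assumes "anticomm_algebra scale mu"
    and "\<exists>Basis. finite_dimensional_vector_space scale Basis"
    and "subalgebra scale mu B"
    and "B \<inter> center mu = {0}"
    and "\<forall>v. \<exists>b\<in>B. \<exists>z\<in>center mu. v = b + z"
    and "t \<noteq> 0"
  shows "iso_to_product scale (derivations scale mu UNIV t 1 0)
           (derivations scale mu B t 1 0) (quot_maps scale mu)"
proof -
  have vs: "vector_space scale"
    and linl: "\<And>x. Vector_Spaces.linear scale scale (mu x)"
    and linr: "\<And>y. Vector_Spaces.linear scale scale (\<lambda>x. mu x y)"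
    and ac: "\<And>x y. mu x y = - mu y x"
    using assms(1) unfolding anticomm_algebra_def by blast+
  interpret V: vector_space scale by (rule vs)
  have muadd1: "mu (x + y) z = mu x z + mu y z" for x y z
    using linr[of z] unfolding Vector_Spaces.linear_iff by auto
  have muadd2: "mu z (x + y) = mu z x + mu z y" for x y z
    using linl[of z] unfolding Vector_Spaces.linear_iff by auto
  have musc1: "mu (scale r x) z = scale r (mu x z)" for r x z
    using linr[of z] unfolding Vector_Spaces.linear_iff by auto
  have mu01: "mu 0 y = 0" for y using muadd1[of 0 0 y] by simp
  define Z where "Z = center mu"
  have Zi: "z \<in> Z \<Longrightarrow> mu z y = 0" for z y unfolding Z_def center_def by auto
  have Zi2: "z \<in> Z \<Longrightarrow> mu y z = 0" for z y using Zi[of z y] ac[of y z] by simp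
  have subZ: "V.subspace Z"
    unfolding V.subspace_def Z_def center_def by (auto simp: mu01 muadd1 musc1)
  have subB: "V.subspace B" and Bmu: "\<And>x y. x \<in> B \<Longrightarrow> y \<in> B \<Longrightarrow> mu x y \<in> B"
    using assms(3) unfolding subalgebra_def by auto
  have BZ: "x \<in> B \<Longrightarrow> x \<in> Z \<Longrightarrow> x = 0" for x using assms(4) unfolding Z_def by auto
  have ex: "\<exists>b. b \<in> B \<and> v - b \<in> Z" for v
    using assms(5) unfolding Z_def by (metis add_diff_cancel_left')
  define p where "p v = (SOME b. b \<in> B \<and> v - b \<in> Z)" for v
  have pB: "p v \<in> B" and pZ: "v - p v \<in> Z" for v
    using someI_ex[OF ex[of v]] unfolding p_def by auto
  have puniq: "b \<in> B \<Longrightarrow> v - b \<in> Z \<Longrightarrow> p v = b" for v b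
  proof -
    assume b: "b \<in> B" "v - b \<in> Z"
    have "p v - b \<in> B" using V.subspace_diff[OF subB pB b(1)] .
    moreover have "p v - b = (v - b) - (v - p v)" by simp
    hence "p v - b \<in> Z" using V.subspace_diff[OF subZ b(2) pZ[of v]] by simp
    ultimately have "p v - b = 0" using BZ by blast
    thus ?thesis by simp
  qed
  have padd: "p (u + v) = p u + p v" for u v
    apply (rule puniq)
     apply (rule V.subspace_add[OF subB pB pB])
    using V.subspace_add[OF subZ pZ[of u] pZ[of v]] by (simp add: algebra_simps)
  have pscale: "p (scale r v) = scale r (p v)" for r v
    apply (rule puniq)
     apply (rule V.subspace_scale[OF subB pB])
    using V.subspace_scale[OF subZ pZ[of v], of r] by (simp add: V.scale_right_diff_distrib)
  have pidB: "b \<in> B \<Longrightarrow> p b = b" for b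
    by (rule puniq) (auto intro: V.subspace_0[OF subZ])
  have p0Z: "z \<in> Z \<Longrightarrow> p z = 0" for z
    by (rule puniq) (auto intro: V.subspace_0[OF subB])
  define q where "q v = v - p v" for v
  have qZ: "q v \<in> Z" for v unfolding q_def by (rule pZ)
  have qadd: "q (u + v) = q u + q v" for u v unfolding q_def padd by simp
  have qscale: "q (scale r v) = scale r (q v)" for r v
    unfolding q_def pscale by (simp add: V.scale_right_diff_distrib)
  have qB: "b \<in> B \<Longrightarrow> q b = 0" for b unfolding q_def using pidB by simp
  have pq: "v = p v + q v" for v unfolding q_def by simp
  have mupq: "mu X Y = mu (p X) (p Y)" for X Y
  proof -
    have "mu X Y = mu (p X + q X) (p Y + q Y)" using pq[of X] pq[of Y] by simp
    also have "\<dots> = mu (p X) (p Y)" by (simp add: muadd1 muadd2 Zi Zi2 qZ)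
    finally show ?thesis .
  qed
  have muB: "mu X Y \<in> B" for X Y using mupq Bmu pB by metis
  have muD: "mu X Y \<in> derived_alg scale mu" for X Y
    unfolding derived_alg_def by (rule V.span_base) blast
  have derUNIV: "D \<in> derivations scale mu UNIV t 1 0 \<longleftrightarrow>
      (\<forall>x y. D (x + y) = D x + D y) \<and> (\<forall>r x. D (scale r x) = scale r (D x))
      \<and> (\<forall>X Y. scale t (D (mu X Y)) = mu (D X) Y)" for D
    unfolding derivations_def lin_maps_def by auto
  have derB: "D \<in> derivations scale mu B t 1 0 \<longleftrightarrow>
      (\<forall>x\<in>B. D x \<in> B) \<and> (\<forall>x. x \<notin> B \<longrightarrow> D x = 0) \<and>
      (\<forall>x\<in>B. \<forall>y\<in>B. D (x + y) = D x + D y) \<and> (\<forall>r. \<forall>x\<in>B. D (scale r x) = scale r (D x))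
      \<and> (\<forall>X\<in>B. \<forall>Y\<in>B. scale t (D (mu X Y)) = mu (D X) Y)" for D
    unfolding derivations_def lin_maps_def by auto
  have quot: "f \<in> quot_maps scale mu \<longleftrightarrow>
      (\<forall>x. f x \<in> Z) \<and> (\<forall>x y. f (x + y) = f x + f y) \<and> (\<forall>r x. f (scale r x) = scale r (f x))
      \<and> (\<forall>x\<in>derived_alg scale mu. f x = 0)" for f
    unfolding quot_maps_def lin_maps_def Z_def by auto
  have Dinv: "D (mu X Y) = scale (inverse t) (mu (D X) Y)"
    if "D \<in> derivations scale mu UNIV t 1 0" for D X Y
  proof -
    have "scale (inverse t) (scale t (D (mu X Y))) = D (mu X Y)" using assms(6) by simp
    thus ?thesis using that unfolding derUNIV by simp
  qed
  have DmuB: "D (mu X Y) \<in> B" if "D \<in> derivations scale mu UNIV t 1 0" for D X Y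
    using Dinv[OF that] muB V.subspace_scale[OF subB] by metis
  have DZ: "D z \<in> Z" if "D \<in> derivations scale mu UNIV t 1 0" "z \<in> Z" for D z
  proof -
    have D0: "D 0 = 0" using that(1) unfolding derUNIV by (metis add_cancel_right_right add_0)
    have "mu (D z) Y = 0" for Y
      using that(1) Zi[OF that(2), of Y] D0 unfolding derUNIV by (metis V.scale_zero_right)
    thus ?thesis unfolding Z_def center_def by auto
  qed
  define \<Phi> where "\<Phi> D = ((\<lambda>x. if x \<in> B then p (D x) else 0), (\<lambda>x. q (D x)))" for D :: "'v \<Rightarrow> 'v"
  have into: "\<Phi> D \<in> derivations scale mu B t 1 0 \<times> quot_maps scale mu"
    if D: "D \<in> derivations scale mu UNIV t 1 0" for D
  proof -
    have Dl: "D (x + y) = D x + D y" "D (scale r x) = scale r (D x)"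
      "scale t (D (mu X Y)) = mu (D X) Y" for x y r X Y using D unfolding derUNIV by auto
    have 1: "fst (\<Phi> D) \<in> derivations scale mu B t 1 0"
      unfolding derB \<Phi>_def fst_conv
    proof (intro conjI ballI allI impI)
      fix X Y assume XY: "X \<in> B" "Y \<in> B"
      have "scale t (p (D (mu X Y))) = scale t (D (mu X Y))" using pidB DmuB[OF D] by simp
      also have "\<dots> = mu (D X) Y" by (rule Dl)
      also have "\<dots> = mu (p (D X)) Y" using pq[of "D X"] by (metis muadd1 Zi qZ add_0_right)
      finally show "scale t (if mu X Y \<in> B then p (D (mu X Y)) else 0) =
          mu (if X \<in> B then p (D X) else 0) Y" using XY Bmu by simp
    qed (auto simp: pB Dl padd pscale V.subspace_add[OF subB] V.subspace_scale[OF subB])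
    have 2: "snd (\<Phi> D) \<in> quot_maps scale mu"
      unfolding quot \<Phi>_def snd_conv
    proof (intro conjI ballI allI)
      fix x assume "x \<in> derived_alg scale mu"
      then show "q (D x) = 0" unfolding derived_alg_def
      proof (induction rule: V.span_induct_alt)
        case base
        have "D 0 = 0" using Dl(2)[of 0 0] by simp
          moreover have "p 0 = 0" using pidB[OF V.subspace_0[OF subB]] .
          ultimately show ?case unfolding q_def by simp
      next
        case (step c x y)
        then obtain X Y where "x = mu X Y" by auto
        hence "q (D x) = 0" using qB DmuB[OF D] by simp
        thus ?case using step by (simp add: Dl qadd qscale)
      qed
    qed (auto simp: qZ Dl qadd qscale)
    show ?thesis using 1 2 by (simp add: mem_Times_iff)
  qed
  have recon: "D x = p (D (p x)) + q (D x)" if D: "D \<in> derivations scale mu UNIV t 1 0" for D x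
  proof -
    have "p (D x) = p (D (p x + q x))" using pq[of x] by simp
    also have "\<dots> = p (D (p x)) + p (D (q x))" using D unfolding derUNIV by (simp add: padd)
    also have "p (D (q x)) = 0" using p0Z DZ[OF D qZ] by simp
    finally show ?thesis using pq[of "D x"] by simp
  qed
  have inj: "inj_on \<Phi> (derivations scale mu UNIV t 1 0)"
  proof (rule inj_onI)
    fix D D' assume D: "D \<in> derivations scale mu UNIV t 1 0" and D': "D' \<in> derivations scale mu UNIV t 1 0"
      and eq: "\<Phi> D = \<Phi> D'"
    have e1: "p (D b) = p (D' b)" if "b \<in> B" for b
      using fun_cong[OF arg_cong[OF eq, of fst], of b] that unfolding \<Phi>_def by simp
    have e2: "q (D x) = q (D' x)" for x
      using fun_cong[OF arg_cong[OF eq, of snd], of x] unfolding \<Phi>_def by simp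
    show "D = D'"
    proof
      fix x show "D x = D' x" using recon[OF D, of x] recon[OF D', of x] e1[OF pB] e2 by metis
    qed
  qed
  have surj: "\<Phi> ` derivations scale mu UNIV t 1 0 \<supseteq> derivations scale mu B t 1 0 \<times> quot_maps scale mu"
  proof
    fix P assume "P \<in> derivations scale mu B t 1 0 \<times> quot_maps scale mu"
    then obtain D1 f where P: "P = (D1, f)" and D1: "D1 \<in> derivations scale mu B t 1 0"
      and f: "f \<in> quot_maps scale mu" by auto
    have D1l: "\<And>x. x \<in> B \<Longrightarrow> D1 x \<in> B" "\<And>x. x \<notin> B \<Longrightarrow> D1 x = 0"
      "\<And>x y. x \<in> B \<Longrightarrow> y \<in> B \<Longrightarrow> D1 (x + y) = D1 x + D1 y"
      "\<And>r x. x \<in> B \<Longrightarrow> D1 (scale r x) = scale r (D1 x)"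
      "\<And>X Y. X \<in> B \<Longrightarrow> Y \<in> B \<Longrightarrow> scale t (D1 (mu X Y)) = mu (D1 X) Y"
      using D1 unfolding derB by auto
    have fl: "\<And>x. f x \<in> Z" "\<And>x y. f (x + y) = f x + f y" "\<And>r x. f (scale r x) = scale r (f x)"
      "\<And>x. x \<in> derived_alg scale mu \<Longrightarrow> f x = 0"
      using f unfolding quot by auto
    define D where "D v = D1 (p v) + f v" for v
    have DD: "D \<in> derivations scale mu UNIV t 1 0"
      unfolding derUNIV
    proof (intro conjI allI)
      fix x y show "D (x + y) = D x + D y"
        unfolding D_def padd by (simp add: D1l(3) pB fl(2) algebra_simps)
    next
      fix r x show "D (scale r x) = scale r (D x)"
        unfolding D_def pscale by (simp add: D1l(4) pB fl(3) V.scale_right_distrib)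
    next
      fix X Y
      have "scale t (D (mu X Y)) = scale t (D1 (mu (p X) (p Y)))"
        unfolding D_def using fl(4)[OF muD, of X Y] pidB[OF muB, of X Y] mupq[of X Y] by simp
      also have "\<dots> = mu (D1 (p X)) (p Y)" using D1l(5) pB by blast
      also have "\<dots> = mu (D1 (p X)) Y" using pq[of Y] by (metis muadd2 Zi2 qZ add_0_right)
      also have "\<dots> = mu (D X) Y" unfolding D_def by (simp add: muadd1 Zi fl(1))
      finally show "scale t (D (mu X Y)) = mu (D X) Y" .
    qed
    have "\<Phi> D = (D1, f)"
    proof -
      have a: "(\<lambda>x. if x \<in> B then p (D x) else 0) = D1"
      proof
        fix x show "(if x \<in> B then p (D x) else 0) = D1 x"
        proof (cases "x \<in> B")
          case True
          have "p (D x) = D1 x" unfolding D_def using pidB[OF True] D1l(1)[OF True] fl(1)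
            by (intro puniq) auto
          thus ?thesis using True by simp
        qed (simp add: D1l(2))
      qed
      have b: "(\<lambda>x. q (D x)) = f"
      proof
        fix x
        have "p (D x) = D1 (p x)" unfolding D_def using D1l(1)[OF pB] fl(1)
          by (intro puniq) auto
        thus "q (D x) = f x" unfolding q_def D_def by simp
      qed
      show ?thesis unfolding \<Phi>_def a b ..
    qed
    thus "P \<in> \<Phi> ` derivations scale mu UNIV t 1 0" using DD P by (metis image_eqI)
  qed
  have bij: "bij_betw \<Phi> (derivations scale mu UNIV t 1 0) (derivations scale mu B t 1 0 \<times> quot_maps scale mu)"
    unfolding bij_betw_def using inj into surj by blast
  have hadd: "\<Phi> (fadd f g) = (fadd (fst (\<Phi> f)) (fst (\<Phi> g)), fadd (snd (\<Phi> f)) (snd (\<Phi> g)))" for f g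
    unfolding \<Phi>_def fadd_def by (auto simp: padd qadd fun_eq_iff)
  have hsc: "\<Phi> (fscale scale r f) = (fscale scale r (fst (\<Phi> f)), fscale scale r (snd (\<Phi> f)))" for r f
    unfolding \<Phi>_def fscale_def by (auto simp: pscale qscale fun_eq_iff)
  show ?thesis unfolding iso_to_product_def using bij hadd hsc by blast
qed

end
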